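(* Let $M$ be a $4$-dimensional Riemannian manifold with metric $g$ and affinor structure $q$ (a $(1,1)$-tensor field) whose components in local coordinates $(x^1,x^2,x^3,x^4)$ are $$g_{ij}=\begin{pmatrix} A & B & C & B\\ B & A & B & C\\ C & B & A & B\\ B & C & B & A\end{pmatrix},\qquad q_i^{\ j}=\begin{pmatrix} 0&1&0&0\\0&0&1&0\\0&0&0&1\\1&0&0&0\end{pmatrix},$$ where $A,B,C$ are smooth functions with $0<B<C<A$, and suppose $q$ is parallel, i.e. $\nabla q=0$ where $\nabla$ is the Levi-Civita connection of $g$. Let $p\in M$ and let $x=(x^1,x^2,x^3,x^4)\in T_pM$ satisfy $((x^1-x^3)^2+(x^2-x^4)^2)(x^1-x^2+x^3-x^4)(x^1+x^2+x^3+x^4)\neq 0$ (so that $x,qx,q^2x,q^3x$ are linearly independent). Then the sectional curvatures of the $2$-planes $E_1=\{x,qx\}$, $E_3=\{q^3x,x\}$, $E_4=\{q^2x,qx\}$, $E_6=\{q^2x,q^3x\}$ are all equal, and the sectional curvatures of the $2$-planes $E_2=\{x,q^2x\}$ and $E_5=\{q^3x,qx\}$ are zero.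
   Context: $R$ denotes the Riemann curvature tensor of $\nabla$, $R(x,y)z=\nabla_x\nabla_yz-\nabla_y\nabla_xz-\nabla_{[x,y]}z$, with associated $(0,4)$-tensor $R(x,y,z,u)=g(R(x,y)z,u)$. The sectional curvature of the $2$-plane spanned by linearly independent $x,y\in T_pM$ is $\mu(\{x,y\};p)=\dfrac{R(x,y,x,y)}{g(x,x)g(y,y)-g(x,y)^2}$. The structure satisfies $q^4=\mathrm{id}$ and $g(qx,qy)=g(x,y)$. *)

theory Defs
  imports "HOL-Analysis.Analysis"
begin

text \<open>Local coordinates (x1,x2,x3,x4) on a chart: points are in real^4, indices are of type 4.\<close>

definition pd :: "4 \<Rightarrow> (real^4 \<Rightarrow> real) \<Rightarrow> real^4 \<Rightarrow> real" where
  "pd k f p = frechet_derivative f (at p) (axis k 1)"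

definition smooth_on :: "(real^4) set \<Rightarrow> (real^4 \<Rightarrow> real) \<Rightarrow> bool" where
  "smooth_on U f \<longleftrightarrow> (\<forall>ks::4 list. \<forall>p\<in>U. (foldr pd ks f) differentiable (at p))"

definition gmat :: "(real^4 \<Rightarrow> real) \<Rightarrow> (real^4 \<Rightarrow> real) \<Rightarrow> (real^4 \<Rightarrow> real) \<Rightarrow> real^4 \<Rightarrow> real^4^4" where
  "gmat A B C p = (\<chi> i j. if j - i = 0 then A p else if j - i = 2 then C p else B p)"

definition ginv :: "(real^4 \<Rightarrow> real) \<Rightarrow> (real^4 \<Rightarrow> real) \<Rightarrow> (real^4 \<Rightarrow> real) \<Rightarrow> real^4 \<Rightarrow> real^4^4" where
  "ginv A B C p = matrix_inv (gmat A B C p)"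

text \<open>Affinor components q_i^j (row i, column j): q_i^j = 1 iff j = i + 1 (mod 4).\<close>
definition qcomp :: "4 \<Rightarrow> 4 \<Rightarrow> real" where
  "qcomp i j = (if j = i + 1 then 1 else 0)"

definition qact :: "real^4 \<Rightarrow> real^4" where
  "qact x = (\<chi> j. \<Sum>i\<in>UNIV. qcomp i j * x $ i)"

definition christoffel ::
  "(real^4 \<Rightarrow> real) \<Rightarrow> (real^4 \<Rightarrow> real) \<Rightarrow> (real^4 \<Rightarrow> real) \<Rightarrow> 4 \<Rightarrow> 4 \<Rightarrow> 4 \<Rightarrow> real^4 \<Rightarrow> real" where
  "christoffel A B C k i j p =
     (\<Sum>l\<in>UNIV. ginv A B C p $ k $ l / 2 *
        (pd i (\<lambda>y. gmat A B C y $ j $ l) p + pd j (\<lambda>y. gmat A B C y $ i $ l) p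
         - pd l (\<lambda>y. gmat A B C y $ i $ j) p))"

definition nabla_q ::
  "(real^4 \<Rightarrow> real) \<Rightarrow> (real^4 \<Rightarrow> real) \<Rightarrow> (real^4 \<Rightarrow> real) \<Rightarrow> 4 \<Rightarrow> 4 \<Rightarrow> 4 \<Rightarrow> real^4 \<Rightarrow> real" where
  "nabla_q A B C k i j p =
     pd k (\<lambda>y. qcomp i j) p
     - (\<Sum>m\<in>UNIV. christoffel A B C m k i p * qcomp m j)
     + (\<Sum>m\<in>UNIV. christoffel A B C j k m p * qcomp i m)"

text \<open>Curvature components R(d_i,d_j)d_k = R_ijk^l d_l for
  R(x,y)z = nabla_x nabla_y z - nabla_y nabla_x z - nabla_[x,y] z.\<close>
definition curv ::
  "(real^4 \<Rightarrow> real) \<Rightarrow> (real^4 \<Rightarrow> real) \<Rightarrow> (real^4 \<Rightarrow> real) \<Rightarrow> 4 \<Rightarrow> 4 \<Rightarrow> 4 \<Rightarrow> 4 \<Rightarrow> real^4 \<Rightarrow> real" where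
  "curv A B C i j k l p =
     pd i (christoffel A B C l j k) p - pd j (christoffel A B C l i k) p
     + (\<Sum>m\<in>UNIV. christoffel A B C m j k p * christoffel A B C l i m p
                 - christoffel A B C m i k p * christoffel A B C l j m p)"

definition gform ::
  "(real^4 \<Rightarrow> real) \<Rightarrow> (real^4 \<Rightarrow> real) \<Rightarrow> (real^4 \<Rightarrow> real) \<Rightarrow> real^4 \<Rightarrow> real^4 \<Rightarrow> real^4 \<Rightarrow> real" where
  "gform A B C p x y = (\<Sum>i\<in>UNIV. \<Sum>j\<in>UNIV. gmat A B C p $ i $ j * x $ i * y $ j)"

definition R4 ::
  "(real^4 \<Rightarrow> real) \<Rightarrow> (real^4 \<Rightarrow> real) \<Rightarrow> (real^4 \<Rightarrow> real) \<Rightarrow> real^4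
    \<Rightarrow> real^4 \<Rightarrow> real^4 \<Rightarrow> real^4 \<Rightarrow> real^4 \<Rightarrow> real" where
  "R4 A B C p x y z u =
     gform A B C p (\<chi> l. \<Sum>i\<in>UNIV. \<Sum>j\<in>UNIV. \<Sum>k\<in>UNIV. x $ i * y $ j * z $ k * curv A B C i j k l p) u"

definition sectional ::
  "(real^4 \<Rightarrow> real) \<Rightarrow> (real^4 \<Rightarrow> real) \<Rightarrow> (real^4 \<Rightarrow> real) \<Rightarrow> real^4 \<Rightarrow> real^4 \<Rightarrow> real^4 \<Rightarrow> real" where
  "sectional A B C p x y =
     R4 A B C p x y x y / (gform A B C p x x * gform A B C p y y - (gform A B C p x y)\<^sup>2)"

end

theory Submission
  imports Defs
begin

lemma pd_has: "(f has_derivative D) (at p) \<Longrightarrow> pd k f p = D (axis k 1)"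
  unfolding pd_def using frechet_derivative_at by metis

lemma pd_works: "f differentiable (at p) \<Longrightarrow> (f has_derivative (\<lambda>h. frechet_derivative f (at p) h)) (at p)"
  using frechet_derivative_works by (metis eta_contract_eq)

lemma pd_local:
  assumes "open S" "p \<in> S" "\<And>y. y \<in> S \<Longrightarrow> f y = g y"
  shows "pd k f p = pd k g p"
proof -
  have "(\<lambda>D. (f has_derivative D) (at p)) = (\<lambda>D. (g has_derivative D) (at p))"
  proof (rule ext, rule iffI)
    fix D assume "(f has_derivative D) (at p)"
    then show "(g has_derivative D) (at p)"
      by (rule has_derivative_transform_within_open[OF _ assms(1,2)]) (simp add: assms(3))
  next
    fix D assume "(g has_derivative D) (at p)"
    then show "(f has_derivative D) (at p)"
      by (rule has_derivative_transform_within_open[OF _ assms(1,2)]) (simp add: assms(3))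
  qed
  then show ?thesis unfolding pd_def frechet_derivative_def by simp
qed

lemma pd_const: "pd k (\<lambda>y. c) p = 0"
  by (rule trans[OF pd_has[OF has_derivative_const]]) simp

lemma pd_add:
  assumes "f differentiable (at p)" "g differentiable (at p)"
  shows "pd k (\<lambda>y. f y + g y) p = pd k f p + pd k g p"
  using pd_has[OF has_derivative_add[OF pd_works[OF assms(1)] pd_works[OF assms(2)]]]
  by (simp add: pd_def)

lemma pd_diff:
  assumes "f differentiable (at p)" "g differentiable (at p)"
  shows "pd k (\<lambda>y. f y - g y) p = pd k f p - pd k g p"
  using pd_has[OF has_derivative_diff[OF pd_works[OF assms(1)] pd_works[OF assms(2)]]]
  by (simp add: pd_def)

lemma pd_mult:
  fixes f g :: "real^4 \<Rightarrow> real"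
  assumes "f differentiable (at p)" "g differentiable (at p)"
  shows "pd k (\<lambda>y. f y * g y) p = pd k f p * g p + f p * pd k g p"
  using pd_has[OF has_derivative_mult[OF pd_works[OF assms(1)] pd_works[OF assms(2)]]]
  by (simp add: pd_def)

lemma pd_divc:
  fixes f :: "real^4 \<Rightarrow> real"
  assumes "f differentiable (at p)"
  shows "pd k (\<lambda>y. f y / c) p = pd k f p / c"
proof -
  have "pd k (\<lambda>y. f y * (\<lambda>y. 1/c) y) p = pd k f p * (1/c) + f p * pd k (\<lambda>y. 1/c) p"
    by (rule pd_mult[OF assms]) simp
  then show ?thesis by (simp add: pd_const)
qed

lemma pd_sum:
  fixes f :: "'i \<Rightarrow> real^4 \<Rightarrow> real"
  assumes "finite I" "\<And>i. i \<in> I \<Longrightarrow> f i differentiable (at p)"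
  shows "pd k (\<lambda>y. \<Sum>i\<in>I. f i y) p = (\<Sum>i\<in>I. pd k (f i) p)"
proof -
  have "((\<lambda>y. \<Sum>i\<in>I. f i y) has_derivative (\<lambda>h. \<Sum>i\<in>I. frechet_derivative (f i) (at p) h)) (at p)"
    by (rule has_derivative_sum) (use pd_works assms in auto)
  from pd_has[OF this] show ?thesis by (simp add: pd_def)
qed

lemma deriv_line:
  fixes f :: "real^4 \<Rightarrow> real"
  assumes "f differentiable (at (c + t *\<^sub>R v))"
  shows "((\<lambda>s. f (c + s *\<^sub>R v)) has_derivative (\<lambda>s. s * frechet_derivative f (at (c + t *\<^sub>R v)) v)) (at t within X)"
proof -
  have d1: "((\<lambda>s. c + s *\<^sub>R v) has_derivative (\<lambda>s. s *\<^sub>R v)) (at t within X)"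
    by (auto intro!: derivative_eq_intros)
  have lin: "linear (frechet_derivative f (at (c + t *\<^sub>R v)))"
    using assms frechet_derivative_works has_derivative_linear by blast
  have "((\<lambda>s. f (c + s *\<^sub>R v)) has_derivative (\<lambda>s. frechet_derivative f (at (c + t *\<^sub>R v)) (s *\<^sub>R v))) (at t within X)"
    using has_derivative_in_compose[OF d1 has_derivative_at_withinI[OF pd_works[OF assms]]] 
    by (simp add: o_def)
  moreover have "\<And>s. frechet_derivative f (at (c + t *\<^sub>R v)) (s *\<^sub>R v) = s * frechet_derivative f (at (c + t *\<^sub>R v)) v"
    using linear_scale[OF lin] by simp
  ultimately show ?thesis by simp
qed

lemma dist_add_self: "dist p (p + v) = norm (v::real^4)"
  by (simp add: dist_norm)

definition Dl :: "(real^4 \<Rightarrow> real) \<Rightarrow> real^4 \<Rightarrow> 4 \<Rightarrow> 4 \<Rightarrow> real \<Rightarrow> real" where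
  "Dl f p i j h = f (p + h *\<^sub>R axis i 1 + h *\<^sub>R axis j 1) - f (p + h *\<^sub>R axis i 1) - f (p + h *\<^sub>R axis j 1) + f p"

lemma Dl_sym: "Dl f p i j h = Dl f p j i h"
  unfolding Dl_def by (simp add: algebra_simps)

lemma schwarz_est:
  fixes f :: "real^4 \<Rightarrow> real"
  assumes U: "open U" "p \<in> U" and df: "\<forall>y\<in>U. f differentiable (at y)"
    and dpi: "pd i f differentiable (at p)" and e: "e > 0"
  shows "\<exists>d>0. \<forall>h. 0 < h \<and> h < d \<longrightarrow> \<bar>Dl f p i j h - h^2 * pd j (pd i f) p\<bar> \<le> 4 * e * h^2"
proof -
  obtain r where r: "r > 0" "ball p r \<subseteq> U" using U open_contains_ball by blast
  define D where "D = frechet_derivative (pd i f) (at p)"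
  have hD: "(pd i f has_derivative D) (at p)" unfolding D_def using dpi frechet_derivative_works by blast
  then obtain \<delta> where \<delta>: "\<delta> > 0" "\<And>y. norm (y - p) < \<delta> \<Longrightarrow> norm (pd i f y - pd i f p - D (y - p)) \<le> e * norm (y - p)"
    using e unfolding has_derivative_at_alt by blast
  have linD: "linear D" using hD has_derivative_linear by blast
  have Dj: "D (axis j 1) = pd j (pd i f) p" unfolding D_def pd_def ..
  define d where "d = min (r/2) (\<delta>/2)"
  have "d > 0" using r \<delta> by (simp add: d_def)
  moreover have "\<bar>Dl f p i j h - h^2 * pd j (pd i f) p\<bar> \<le> 4 * e * h^2" if h: "0 < h" "h < d" for h
  proof -
    let ?ei = "axis i 1 :: real^4" and ?ej = "axis j 1 :: real^4"
    have nb: "norm (t *\<^sub>R ?ei + s *\<^sub>R ?ej) \<le> \<bar>t\<bar> + \<bar>s\<bar>" for t s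
      by (rule order_trans[OF norm_triangle_ineq]) simp
    define \<phi> where "\<phi> t = f ((p + h *\<^sub>R ?ej) + t *\<^sub>R ?ei) - f (p + t *\<^sub>R ?ei)" for t
    have inU: "p + (t *\<^sub>R ?ei + s *\<^sub>R ?ej) \<in> U" if "\<bar>t\<bar> \<le> h" "\<bar>s\<bar> \<le> h" for t s
    proof -
      have "norm (t *\<^sub>R ?ei + s *\<^sub>R ?ej) < r"
        using nb[of t s] that h r unfolding d_def by linarith
      then have "p + (t *\<^sub>R ?ei + s *\<^sub>R ?ej) \<in> ball p r" by (simp only: mem_ball dist_add_self)
      then show ?thesis using r by blast
    qed
    have der: "(\<phi> has_derivative (\<lambda>s. s * pd i f ((p + h *\<^sub>R ?ej) + t *\<^sub>R ?ei) - s * pd i f (p + t *\<^sub>R ?ei))) (at t within {0..h})"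
      if "0 \<le> t" "t \<le> h" for t
    proof -
      have a1: "f differentiable (at ((p + h *\<^sub>R ?ej) + t *\<^sub>R ?ei))"
        using df inU[of t h] that h by (simp add: algebra_simps)
      have a2: "f differentiable (at (p + t *\<^sub>R ?ei))"
        using df inU[of t 0] that h by (simp add: algebra_simps)
      show ?thesis unfolding \<phi>_def pd_def
        by (rule has_derivative_diff[OF deriv_line[OF a1] deriv_line[OF a2]])
    qed
    obtain \<xi> where \<xi>: "\<xi> \<in> {0<..<h}" "\<phi> h - \<phi> 0 = (h - 0) * pd i f ((p + h *\<^sub>R ?ej) + \<xi> *\<^sub>R ?ei) - (h - 0) * pd i f (p + \<xi> *\<^sub>R ?ei)"
      using mvt_simple[OF h(1) der] by blast
    have Dleq: "Dl f p i j h = h * (pd i f (p + (\<xi> *\<^sub>R ?ei + h *\<^sub>R ?ej)) - pd i f (p + \<xi> *\<^sub>R ?ei))"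
    proof -
      have v1: "(p + h *\<^sub>R ?ej) + h *\<^sub>R ?ei = p + h *\<^sub>R ?ei + h *\<^sub>R ?ej" by (simp add: algebra_simps)
      have v2: "(p + h *\<^sub>R ?ej) + \<xi> *\<^sub>R ?ei = p + (\<xi> *\<^sub>R ?ei + h *\<^sub>R ?ej)" by (simp add: algebra_simps)
      show ?thesis using \<xi>(2) unfolding \<phi>_def Dl_def v1 v2 by (simp add: right_diff_distrib)
    qed
    have n1: "norm (\<xi> *\<^sub>R ?ei + h *\<^sub>R ?ej) \<le> 2 * h" using nb[of \<xi> h] \<xi>(1) by auto
    have e1: "\<bar>pd i f (p + (\<xi> *\<^sub>R ?ei + h *\<^sub>R ?ej)) - pd i f p - D (\<xi> *\<^sub>R ?ei + h *\<^sub>R ?ej)\<bar> \<le> e * (2 * h)"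
    proof -
      have "norm (\<xi> *\<^sub>R ?ei + h *\<^sub>R ?ej) < \<delta>" using n1 h unfolding d_def by linarith
      then have "\<bar>pd i f (p + (\<xi> *\<^sub>R ?ei + h *\<^sub>R ?ej)) - pd i f p - D (\<xi> *\<^sub>R ?ei + h *\<^sub>R ?ej)\<bar> \<le> e * norm (\<xi> *\<^sub>R ?ei + h *\<^sub>R ?ej)"
        using \<delta>(2)[of "p + (\<xi> *\<^sub>R ?ei + h *\<^sub>R ?ej)"] by simp
      also have "\<dots> \<le> e * (2 * h)" using n1 e by (simp add: mult_left_mono)
      finally show ?thesis .
    qed
    have e2: "\<bar>pd i f (p + \<xi> *\<^sub>R ?ei) - pd i f p - D (\<xi> *\<^sub>R ?ei)\<bar> \<le> e * h"
    proof -
      have n2: "norm (\<xi> *\<^sub>R ?ei) \<le> h" using \<xi>(1) by auto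
      have "norm (\<xi> *\<^sub>R ?ei) < \<delta>" using n2 h unfolding d_def by linarith
      then have "\<bar>pd i f (p + \<xi> *\<^sub>R ?ei) - pd i f p - D (\<xi> *\<^sub>R ?ei)\<bar> \<le> e * norm (\<xi> *\<^sub>R ?ei)"
        using \<delta>(2)[of "p + \<xi> *\<^sub>R ?ei"] by simp
      also have "\<dots> \<le> e * h" using n2 e by (simp add: mult_left_mono)
      finally show ?thesis .
    qed
    have lin: "D (\<xi> *\<^sub>R ?ei + h *\<^sub>R ?ej) - D (\<xi> *\<^sub>R ?ei) = h * pd j (pd i f) p"
      using linear_add[OF linD] linear_scale[OF linD] Dj by simp
    have "\<bar>(pd i f (p + (\<xi> *\<^sub>R ?ei + h *\<^sub>R ?ej)) - pd i f (p + \<xi> *\<^sub>R ?ei)) - h * pd j (pd i f) p\<bar> \<le> 3 * e * h"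
      using e1 e2 lin by linarith
    then have W: "h * \<bar>(pd i f (p + (\<xi> *\<^sub>R ?ei + h *\<^sub>R ?ej)) - pd i f (p + \<xi> *\<^sub>R ?ei)) - h * pd j (pd i f) p\<bar> \<le> h * (3 * e * h)"
      using h by (simp add: mult_left_mono)
    have "Dl f p i j h - h^2 * pd j (pd i f) p = h * ((pd i f (p + (\<xi> *\<^sub>R ?ei + h *\<^sub>R ?ej)) - pd i f (p + \<xi> *\<^sub>R ?ei)) - h * pd j (pd i f) p)"
      unfolding Dleq by (simp add: power2_eq_square algebra_simps)
    then have "\<bar>Dl f p i j h - h^2 * pd j (pd i f) p\<bar> = h * \<bar>(pd i f (p + (\<xi> *\<^sub>R ?ei + h *\<^sub>R ?ej)) - pd i f (p + \<xi> *\<^sub>R ?ei)) - h * pd j (pd i f) p\<bar>"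
      using h by (simp add: abs_mult)
    also have "\<dots> \<le> 3 * e * h^2" using W by (simp add: power2_eq_square mult_ac)
    also have "\<dots> \<le> 4 * e * h^2" using e by simp
    finally show ?thesis .
  qed
  ultimately show ?thesis by blast
qed

lemma schwarz:
  fixes f :: "real^4 \<Rightarrow> real"
  assumes U: "open U" "p \<in> U" and df: "\<forall>y\<in>U. f differentiable (at y)"
    and dpi: "pd i f differentiable (at p)" and dpj: "pd j f differentiable (at p)"
  shows "pd i (pd j f) p = pd j (pd i f) p"
proof (rule ccontr)
  let ?a = "pd j (pd i f) p" and ?b = "pd i (pd j f) p"
  assume ne: "?b \<noteq> ?a"
  define e where "e = \<bar>?a - ?b\<bar> / 16"
  have e: "e > 0" using ne by (simp add: e_def)
  obtain d1 where d1: "d1 > 0" "\<forall>h. 0 < h \<and> h < d1 \<longrightarrow> \<bar>Dl f p i j h - h^2 * ?a\<bar> \<le> 4 * e * h^2"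
    using schwarz_est[OF U df dpi e] by blast
  obtain d2 where d2: "d2 > 0" "\<forall>h. 0 < h \<and> h < d2 \<longrightarrow> \<bar>Dl f p j i h - h^2 * ?b\<bar> \<le> 4 * e * h^2"
    using schwarz_est[OF U df dpj e] by blast
  define h where "h = min d1 d2 / 2"
  have h: "0 < h" "h < d1" "h < d2" using d1 d2 by (auto simp: h_def)
  have "\<bar>h^2 * ?a - h^2 * ?b\<bar> \<le> 8 * e * h^2"
  proof -
    have A: "\<bar>Dl f p i j h - h^2 * ?a\<bar> \<le> 4 * e * h^2" using d1(2) h by blast
    have B: "\<bar>Dl f p j i h - h^2 * ?b\<bar> \<le> 4 * e * h^2" using d2(2) h by blast
    show ?thesis using A B Dl_sym[of f p i j h] unfolding abs_le_iff by linarith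
  qed
  moreover have "\<bar>h^2 * ?a - h^2 * ?b\<bar> = h^2 * \<bar>?a - ?b\<bar>"
    by (simp add: abs_mult flip: right_diff_distrib)
  ultimately have "h^2 * \<bar>?a - ?b\<bar> \<le> h^2 * (8 * e)" by (simp add: mult.commute)
  then have "\<bar>?a - ?b\<bar> \<le> 8 * e" using h by simp
  moreover have "\<bar>?a - ?b\<bar> > 0" using ne by simp
  ultimately show False unfolding e_def by simp
qed

lemma gmat_sym: "gmat A B C y $ i $ j = gmat A B C y $ j $ i"
  using exhaust_4[of i] exhaust_4[of j] unfolding gmat_def by auto

lemma gmat_shift: "gmat A B C y $ (i + a) $ (j + a) = gmat A B C y $ i $ j"
  unfolding gmat_def by simp

lemma qact_nth: "qact x $ j = x $ (j - 1)"
proof -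
  have e: "(j = i + 1) = (i = j - 1)" for i :: 4 by (metis add_diff_cancel diff_add_cancel)
  have e2: "(if i = j - 1 then 1 else 0) * x$i = (if i = j - 1 then x$i else 0)" for i :: 4 by simp
  show ?thesis unfolding qact_def qcomp_def by (simp add: e e2)
qed

lemma qpow_nth: "(qact ^^ n) x $ j = x $ (j - of_nat n)"
  by (induction n arbitrary: j) (simp_all add: qact_nth algebra_simps)

lemma sum_shift4: "(\<Sum>m\<in>(UNIV::4 set). f m) = (\<Sum>n\<in>UNIV. f (n + a))"
  by (rule sum.reindex_bij_witness[where j="\<lambda>m. m - a" and i="\<lambda>n. n + a"]) auto

definition RT :: "(4 \<Rightarrow> 4 \<Rightarrow> 4 \<Rightarrow> 4 \<Rightarrow> real) \<Rightarrow> real^4 \<Rightarrow> real^4 \<Rightarrow> real^4 \<Rightarrow> real^4 \<Rightarrow> real" where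
  "RT T x y z u = (\<Sum>(i,j,k,m)\<in>UNIV. x$i * y$j * z$k * u$m * T i j k m)"

lemma sum_tuple4: "(\<Sum>(i,j,k,m)\<in>(UNIV::(4\<times>4\<times>4\<times>4) set). f i j k m) = (\<Sum>i\<in>UNIV. \<Sum>j\<in>UNIV. \<Sum>k\<in>UNIV. \<Sum>m\<in>UNIV. f i j k m)"
  by (simp add: sum.cartesian_product UNIV_Times_UNIV[symmetric] del: UNIV_Times_UNIV)

lemma sum_tuple5: "(\<Sum>(i,j,k,m,l)\<in>(UNIV::(4\<times>4\<times>4\<times>4\<times>4) set). f i j k m l) = (\<Sum>i\<in>UNIV. \<Sum>j\<in>UNIV. \<Sum>k\<in>UNIV. \<Sum>m\<in>UNIV. \<Sum>l\<in>UNIV. f i j k m l)"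
  by (simp add: sum.cartesian_product UNIV_Times_UNIV[symmetric] del: UNIV_Times_UNIV)

lemma swap5: fixes F :: "4\<Rightarrow>4\<Rightarrow>4\<Rightarrow>4\<Rightarrow>4\<Rightarrow>real" shows "(\<Sum>l\<in>UNIV. \<Sum>m\<in>UNIV. \<Sum>i\<in>UNIV. \<Sum>j\<in>UNIV. \<Sum>k\<in>UNIV. (F i j k m l::real)) = (\<Sum>i\<in>UNIV. \<Sum>j\<in>UNIV. \<Sum>k\<in>UNIV. \<Sum>m\<in>UNIV. \<Sum>l\<in>(UNIV::4 set). F i j k m l)"
proof -
  have "(\<Sum>l\<in>UNIV. \<Sum>m\<in>UNIV. \<Sum>i\<in>UNIV. \<Sum>j\<in>UNIV. \<Sum>k\<in>UNIV. F i j k m l) = (\<Sum>(l,m,i,j,k)\<in>(UNIV::(4\<times>4\<times>4\<times>4\<times>4) set). F i j k m l)"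
    by (rule sum_tuple5[symmetric])
  also have "\<dots> = (\<Sum>(i,j,k,m,l)\<in>(UNIV::(4\<times>4\<times>4\<times>4\<times>4) set). F i j k m l)"
    by (rule sum.reindex_bij_witness[where j="\<lambda>(l,m,i,j,k). (i,j,k,m,l)" and i="\<lambda>(i,j,k,m,l). (l,m,i,j,k)"]) auto
  also have "\<dots> = (\<Sum>i\<in>UNIV. \<Sum>j\<in>UNIV. \<Sum>k\<in>UNIV. \<Sum>m\<in>UNIV. \<Sum>l\<in>(UNIV::4 set). F i j k m l)" by (rule sum_tuple5)
  finally show ?thesis .
qed

definition Tt where
  "Tt A B C p i j k m = (\<Sum>l\<in>UNIV. curv A B C i j k l p * gmat A B C p $ l $ m)"

lemma R4_RT: "R4 A B C p x y z u = RT (Tt A B C p) x y z u"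
proof -
  have "R4 A B C p x y z u = (\<Sum>l\<in>UNIV. \<Sum>m\<in>UNIV. \<Sum>i\<in>UNIV. \<Sum>j\<in>UNIV. \<Sum>k\<in>UNIV. x$i * y$j * z$k * u$m * (curv A B C i j k l p * gmat A B C p $ l $ m))"
    unfolding R4_def gform_def by (simp add: sum_distrib_left sum_distrib_right mult_ac)
  also have "\<dots> = (\<Sum>i\<in>UNIV. \<Sum>j\<in>UNIV. \<Sum>k\<in>UNIV. \<Sum>m\<in>UNIV. \<Sum>l\<in>UNIV. x$i * y$j * z$k * u$m * (curv A B C i j k l p * gmat A B C p $ l $ m))"
    by (rule swap5)
  also have "\<dots> = RT (Tt A B C p) x y z u"
    unfolding RT_def sum_tuple4 Tt_def by (simp add: sum_distrib_left)
  finally show ?thesis .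
qed

lemma RT_swap12:
  assumes "\<And>i j k m. T j i k m = - T i j k m"
  shows "RT T y x z u = - RT T x y z u"
proof -
  have "RT T y x z u = (\<Sum>(i,j,k,m)\<in>UNIV. y$i * x$j * z$k * u$m * T i j k m)" unfolding RT_def ..
  also have "\<dots> = (\<Sum>(i,j,k,m)\<in>UNIV. y$j * x$i * z$k * u$m * T j i k m)"
    by (rule sum.reindex_bij_witness[where j="\<lambda>(i,j,k,m). (j,i,k,m)" and i="\<lambda>(i,j,k,m). (j,i,k,m)"]) auto
  also have "\<dots> = - RT T x y z u" unfolding RT_def sum_negf[symmetric]
  proof (rule sum.cong[OF refl])
    fix w :: "4\<times>4\<times>4\<times>4"
    obtain i j k m where w: "w = (i,j,k,m)" by (cases w)
    show "(case w of (i,j,k,m) \<Rightarrow> y$j * x$i * z$k * u$m * T j i k m) = - (case w of (i,j,k,m) \<Rightarrow> x$i * y$j * z$k * u$m * T i j k m)"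
      unfolding w using assms[of i j k m] by simp
  qed
  finally show ?thesis .
qed

lemma RT_swap34:
  assumes "\<And>i j k m. T i j m k = - T i j k m"
  shows "RT T x y u z = - RT T x y z u"
proof -
  have "RT T x y u z = (\<Sum>(i,j,k,m)\<in>UNIV. x$i * y$j * u$k * z$m * T i j k m)" unfolding RT_def ..
  also have "\<dots> = (\<Sum>(i,j,k,m)\<in>UNIV. x$i * y$j * u$m * z$k * T i j m k)"
    by (rule sum.reindex_bij_witness[where j="\<lambda>(i,j,k,m). (i,j,m,k)" and i="\<lambda>(i,j,k,m). (i,j,m,k)"]) auto
  also have "\<dots> = - RT T x y z u" unfolding RT_def sum_negf[symmetric]
  proof (rule sum.cong[OF refl])
    fix w :: "4\<times>4\<times>4\<times>4"
    obtain i j k m where w: "w = (i,j,k,m)" by (cases w)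
    show "(case w of (i,j,k,m) \<Rightarrow> x$i * y$j * u$m * z$k * T i j m k) = - (case w of (i,j,k,m) \<Rightarrow> x$i * y$j * z$k * u$m * T i j k m)"
      unfolding w using assms[of i j k m] by simp
  qed
  finally show ?thesis .
qed

lemma RT_pair:
  assumes "\<And>i j k m. T k m i j = T i j k m"
  shows "RT T z u x y = RT T x y z u"
proof -
  have "RT T z u x y = (\<Sum>(i,j,k,m)\<in>UNIV. z$i * u$j * x$k * y$m * T i j k m)" unfolding RT_def ..
  also have "\<dots> = (\<Sum>(i,j,k,m)\<in>UNIV. z$k * u$m * x$i * y$j * T k m i j)"
    by (rule sum.reindex_bij_witness[where j="\<lambda>(i,j,k,m). (k,m,i,j)" and i="\<lambda>(i,j,k,m). (k,m,i,j)"]) auto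
  also have "\<dots> = RT T x y z u" unfolding RT_def
  proof (rule sum.cong[OF refl])
    fix w :: "4\<times>4\<times>4\<times>4"
    obtain i j k m where w: "w = (i,j,k,m)" by (cases w)
    show "(case w of (i,j,k,m) \<Rightarrow> z$k * u$m * x$i * y$j * T k m i j) = (case w of (i,j,k,m) \<Rightarrow> x$i * y$j * z$k * u$m * T i j k m)"
      unfolding w using assms[of i j k m] by simp
  qed
  finally show ?thesis .
qed

lemma RT_shift34:
  assumes "\<And>i j k m. T i j (k+1) (m+1) = T i j k m"
  shows "RT T x y (qact z) (qact u) = RT T x y z u"
proof -
  have "RT T x y (qact z) (qact u) = (\<Sum>(i,j,k,m)\<in>UNIV. x$i * y$j * z$(k-1) * u$(m-1) * T i j k m)"
    unfolding RT_def qact_nth ..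
  also have "\<dots> = (\<Sum>(i,j,k,m)\<in>UNIV. x$i * y$j * z$k * u$m * T i j (k+1) (m+1))"
    by (rule sum.reindex_bij_witness[where j="\<lambda>(i,j,k,m). (i,j,k-1,m-1)" and i="\<lambda>(i,j,k,m). (i,j,k+1,m+1)"]) auto
  also have "\<dots> = RT T x y z u" unfolding RT_def
  proof (rule sum.cong[OF refl])
    fix w :: "4\<times>4\<times>4\<times>4"
    obtain i j k m where w: "w = (i,j,k,m)" by (cases w)
    show "(case w of (i,j,k,m) \<Rightarrow> x$i * y$j * z$k * u$m * T i j (k+1) (m+1)) = (case w of (i,j,k,m) \<Rightarrow> x$i * y$j * z$k * u$m * T i j k m)"
      unfolding w using assms[of i j k m] by simp
  qed
  finally show ?thesis .
qed

lemma pair_sym: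
  fixes T :: "'a \<Rightarrow> 'a \<Rightarrow> 'a \<Rightarrow> 'a \<Rightarrow> real"
  assumes a12: "\<And>i j k l. T j i k l = - T i j k l" and a34: "\<And>i j k l. T i j l k = - T i j k l"
    and b: "\<And>i j k l. T i j k l + T j k i l + T k i j l = 0"
  shows "T k l i j = T i j k l"
  using b[of i j k l] b[of j k l i] b[of k l i j] b[of l i j k] a12[of i j k l] a34[of i j k l] a12[of i j l k] a34[of i j l k] a12[of i k j l] a34[of i k j l] a12[of i k l j] a34[of i k l j] a12[of i l j k] a34[of i l j k] a12[of i l k j] a34[of i l k j] a12[of j i k l] a34[of j i k l] a12[of j i l k] a34[of j i l k] a12[of j k i l] a34[of j k i l] a12[of j k l i] a34[of j k l i] a12[of j l i k] a34[of j l i k] a12[of j l k i] a34[of j l k i] a12[of k i j l] a34[of k i j l] a12[of k i l j] a34[of k i l j] a12[of k j i l] a34[of k j i l] a12[of k j l i] a34[of k j l i] a12[of k l i j] a34[of k l i j] a12[of k l j i] a34[of k l j i] a12[of l i j k] a34[of l i j k] a12[of l i k j] a34[of l i k j] a12[of l j i k] a34[of l j i k] a12[of l j k i] a34[of l j k i] a12[of l k i j] a34[of l k i j] a12[of l k j i] a34[of l k j i]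
  by linarith

lemma gform_sym: "gform A B C p a b = gform A B C p b a"
  unfolding gform_def
  by (subst sum.swap) (simp add: gmat_sym mult_ac)

lemma gform_q: "gform A B C p (qact a) (qact b) = gform A B C p a b"
proof -
  have "gform A B C p (qact a) (qact b) = (\<Sum>i\<in>UNIV. \<Sum>j\<in>UNIV. gmat A B C p $ i $ j * a $ (i - 1) * b $ (j - 1))"
    unfolding gform_def qact_nth ..
  also have "\<dots> = (\<Sum>i\<in>UNIV. \<Sum>j\<in>UNIV. gmat A B C p $ (i+1) $ (j+1) * a $ i * b $ j)"
    by (subst sum_shift4[where a=1], subst sum_shift4[where a=1]) simp
  also have "\<dots> = gform A B C p a b" unfolding gform_def gmat_shift ..
  finally show ?thesis .
qed

lemma q4: "(qact ^^ 4) x = x"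
proof -
  have "\<And>i::4. i - of_nat 4 = i" by simp
  then show ?thesis unfolding vec_eq_iff qpow_nth by presburger
qed

lemma antisym_abs:
  fixes Gm :: "'a::finite \<Rightarrow> 'a \<Rightarrow> real" and Ga :: "'a \<Rightarrow> 'a \<Rightarrow> 'a \<Rightarrow> real"
    and dGa :: "'a \<Rightarrow> 'a \<Rightarrow> 'a \<Rightarrow> 'a \<Rightarrow> real" and dG :: "'a \<Rightarrow> 'a \<Rightarrow> 'a \<Rightarrow> real"
    and L :: "'a \<Rightarrow> 'a \<Rightarrow> 'a \<Rightarrow> real" and dL :: "'a \<Rightarrow> 'a \<Rightarrow> 'a \<Rightarrow> 'a \<Rightarrow> real"
  assumes Gsym: "\<And>m l. Gm m l = Gm l m"
  and F1: "\<And>j k l. (\<Sum>m\<in>UNIV. Ga m j k * Gm m l) = L j k l"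
  and F3: "\<And>i j k l. (\<Sum>m\<in>UNIV. dGa i m j k * Gm m l) = dL i j k l - (\<Sum>m\<in>UNIV. Ga m j k * dG i m l)"
  and F5: "\<And>i m l. dG i m l = L i m l + L i l m"
  and F4: "\<And>i j k l. dL i j k l + dL i j l k = dL j i k l + dL j i l k"
  shows "(\<Sum>m\<in>UNIV. (dGa i m j k - dGa j m i k + (\<Sum>n\<in>UNIV. Ga n j k * Ga m i n - Ga n i k * Ga m j n)) * Gm m l)
       + (\<Sum>m\<in>UNIV. (dGa i m j l - dGa j m i l + (\<Sum>n\<in>UNIV. Ga n j l * Ga m i n - Ga n i l * Ga m j n)) * Gm m k) = 0"
proof -
  define S where "S a b c d = (\<Sum>m\<in>UNIV. \<Sum>n\<in>UNIV. Ga m a b * Ga n c d * Gm n m)" for a b c d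
  have Ssym: "S a b c d = S c d a b" for a b c d
    unfolding S_def by (subst sum.swap) (simp add: Gsym mult_ac)
  have Z: "(\<Sum>m\<in>UNIV. (\<Sum>n\<in>UNIV. Ga n a b * Ga m c n) * Gm m l) = (\<Sum>n\<in>UNIV. Ga n a b * L c n l)" for a b c l
  proof -
    have "(\<Sum>m\<in>UNIV. (\<Sum>n\<in>UNIV. Ga n a b * Ga m c n) * Gm m l) = (\<Sum>m\<in>UNIV. \<Sum>n\<in>UNIV. Ga n a b * (Ga m c n * Gm m l))"
      by (simp add: sum_distrib_right sum_distrib_left mult_ac)
    also have "\<dots> = (\<Sum>n\<in>UNIV. \<Sum>m\<in>UNIV. Ga n a b * (Ga m c n * Gm m l))" by (rule sum.swap)
    also have "\<dots> = (\<Sum>n\<in>UNIV. Ga n a b * L c n l)" by (simp add: F1[symmetric] sum_distrib_left)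
    finally show ?thesis .
  qed
  have W: "(\<Sum>m\<in>UNIV. Ga m a b * L c d m) = S a b c d" for a b c d
    unfolding S_def F1[symmetric] by (simp add: sum_distrib_left mult_ac)
  have key: "(\<Sum>m\<in>UNIV. (dGa i m j k - dGa j m i k + (\<Sum>n\<in>UNIV. Ga n j k * Ga m i n - Ga n i k * Ga m j n)) * Gm m l)
     = dL i j k l - dL j i k l - S j k i l + S i k j l" for k l
  proof -
    have "(\<Sum>m\<in>UNIV. (dGa i m j k - dGa j m i k + (\<Sum>n\<in>UNIV. Ga n j k * Ga m i n - Ga n i k * Ga m j n)) * Gm m l)
      = (\<Sum>m\<in>UNIV. dGa i m j k * Gm m l) - (\<Sum>m\<in>UNIV. dGa j m i k * Gm m l)
        + (\<Sum>m\<in>UNIV. (\<Sum>n\<in>UNIV. Ga n j k * Ga m i n) * Gm m l) - (\<Sum>m\<in>UNIV. (\<Sum>n\<in>UNIV. Ga n i k * Ga m j n) * Gm m l)"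
      by (simp add: sum_subtractf sum.distrib left_diff_distrib distrib_right)
    also have "\<dots> = dL i j k l - (\<Sum>m\<in>UNIV. Ga m j k * dG i m l) - (dL j i k l - (\<Sum>m\<in>UNIV. Ga m i k * dG j m l))
        + (\<Sum>n\<in>UNIV. Ga n j k * L i n l) - (\<Sum>n\<in>UNIV. Ga n i k * L j n l)"
      by (simp only: F3 Z)
    also have "\<dots> = dL i j k l - dL j i k l - (\<Sum>m\<in>UNIV. Ga m j k * L i l m) + (\<Sum>m\<in>UNIV. Ga m i k * L j l m)"
      by (simp add: F5 distrib_left sum.distrib)
    also have "\<dots> = dL i j k l - dL j i k l - S j k i l + S i k j l" by (simp only: W)
    finally show ?thesis .
  qed
  show ?thesis unfolding key using Ssym[of j k i l] Ssym[of i k j l] F4[of i j k l] by linarith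
qed

abbreviation gf where "gf A B C i j \<equiv> (\<lambda>y. gmat A B C y $ i $ j)"

lemma gf_cases: "gf A B C i j = A \<or> gf A B C i j = B \<or> gf A B C i j = C"
proof -
  have "gf A B C i j = (if j - i = 0 then A else if j - i = 2 then C else B)"
    by (rule ext) (simp add: gmat_def)
  then show ?thesis by metis
qed

lemma gf_sym: "gf A B C i j = gf A B C j i"
  using exhaust_4[of i] exhaust_4[of j] unfolding gmat_def by auto

definition Lw where
  "Lw A B C j k n y = (pd j (gf A B C k n) y + pd k (gf A B C j n) y - pd n (gf A B C j k) y) / 2"

lemma Lw_fun: "Lw A B C j k n = (\<lambda>y. (pd j (gf A B C k n) y + pd k (gf A B C j n) y - pd n (gf A B C j k) y) / 2)"
  by (rule ext) (simp add: Lw_def)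

lemma chr_Lw: "christoffel A B C m j k y = (\<Sum>n\<in>UNIV. ginv A B C y $ m $ n * Lw A B C j k n y)"
  unfolding christoffel_def Lw_def by simp

definition ia :: "(real^4\<Rightarrow>real) \<Rightarrow> (real^4\<Rightarrow>real) \<Rightarrow> (real^4\<Rightarrow>real) \<Rightarrow> real^4 \<Rightarrow> real" where "ia A B C y = (1/(A y + 2*B y + C y) + 2/(A y - C y) + 1/(A y - 2*B y + C y))/4"
definition ib :: "(real^4\<Rightarrow>real) \<Rightarrow> (real^4\<Rightarrow>real) \<Rightarrow> (real^4\<Rightarrow>real) \<Rightarrow> real^4 \<Rightarrow> real" where "ib A B C y = (1/(A y + 2*B y + C y) - 1/(A y - 2*B y + C y))/4"
definition ic :: "(real^4\<Rightarrow>real) \<Rightarrow> (real^4\<Rightarrow>real) \<Rightarrow> (real^4\<Rightarrow>real) \<Rightarrow> real^4 \<Rightarrow> real" where "ic A B C y = (1/(A y + 2*B y + C y) - 2/(A y - C y) + 1/(A y - 2*B y + C y))/4"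
definition GI where "GI A B C y = (\<chi> i j. if j - i = 0 then ia A B C y else if j - i = 2 then ic A B C y else ib A B C y)"

lemma circ_ids:
  fixes a b c :: real
  assumes n: "a + 2*b + c \<noteq> 0" "a - c \<noteq> 0" "a - 2*b + c \<noteq> 0"
  defines "x \<equiv> (1/(a + 2*b + c) + 2/(a - c) + 1/(a - 2*b + c))/4"
      and "w \<equiv> (1/(a + 2*b + c) - 1/(a - 2*b + c))/4"
      and "z \<equiv> (1/(a + 2*b + c) - 2/(a - c) + 1/(a - 2*b + c))/4"
  shows "a*x + 2*b*w + c*z = 1" "b*x + (a+c)*w + b*z = 0" "c*x + 2*b*w + a*z = 0"
proof -
  define u0 where "u0 = 1/(a + 2*b + c)"
  define u1 where "u1 = 1/(a - c)"
  define u2 where "u2 = 1/(a - 2*b + c)"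
  have h: "(a + 2*b + c) * u0 = 1" "(a - c) * u1 = 1" "(a - 2*b + c) * u2 = 1"
    using n by (simp_all add: u0_def u1_def u2_def)
  have xd: "x = (u0 + 2*u1 + u2)/4" "w = (u0 - u2)/4" "z = (u0 - 2*u1 + u2)/4"
    unfolding x_def w_def z_def u0_def u1_def u2_def by simp_all
  have "a*x + 2*b*w + c*z = ((a + 2*b + c) * u0 + 2*((a - c)*u1) + (a - 2*b + c)*u2)/4"
    unfolding xd by (simp add: field_simps)
  then show "a*x + 2*b*w + c*z = 1" using h by simp
  have "b*x + (a+c)*w + b*z = ((a + 2*b + c) * u0 - (a - 2*b + c)*u2)/4"
    unfolding xd by (simp add: field_simps)
  then show "b*x + (a+c)*w + b*z = 0" using h by simp
  have "c*x + 2*b*w + a*z = ((a + 2*b + c) * u0 - 2*((a - c)*u1) + (a - 2*b + c)*u2)/4"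
    unfolding xd by (simp add: field_simps)
  then show "c*x + 2*b*w + a*z = 0" using h by simp
qed

lemma circ_mult:
  fixes a b c x w z :: real
  assumes e1: "a*x + 2*b*w + c*z = 1" and e2: "b*x + (a+c)*w + b*z = 0" and e3: "c*x + 2*b*w + a*z = 0"
  shows "(\<chi> i j. if j - i = (0::4) then a else if j - i = 2 then c else b) ** (\<chi> i j. if j - i = (0::4) then x else if j - i = 2 then z else w) = mat 1"
    and "(\<chi> i j. if j - i = (0::4) then x else if j - i = 2 then z else w) ** (\<chi> i j. if j - i = (0::4) then a else if j - i = 2 then c else b) = mat 1"
proof -
  have f1: "a*x + 2*(b*w) + c*z = 1" "x*a + 2*(w*b) + z*c = 1" using e1 by (simp_all add: algebra_simps)
  have f2: "b*x + a*w + c*w + b*z = 0" "x*b + w*a + w*c + z*b = 0" using e2 by (simp_all add: algebra_simps)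
  have f3: "c*x + 2*(b*w) + a*z = 0" "x*c + 2*(w*b) + z*a = 0" using e3 by (simp_all add: algebra_simps)
  have f4: "x*a + 2*(b*w) + z*c = 1" "x*c + 2*(b*w) + z*a = 0" using e1 e3 by (simp_all add: algebra_simps)
  show "(\<chi> i j. if j - i = (0::4) then a else if j - i = 2 then c else b) ** (\<chi> i j. if j - i = (0::4) then x else if j - i = 2 then z else w) = mat 1"
    unfolding vec_eq_iff matrix_matrix_mult_def mat_def forall_4 sum_4
    using f1(1) f2 f3(1) f4 by (simp; intro conjI; linarith)
  show "(\<chi> i j. if j - i = (0::4) then x else if j - i = 2 then z else w) ** (\<chi> i j. if j - i = (0::4) then a else if j - i = 2 then c else b) = mat 1"
    unfolding vec_eq_iff matrix_matrix_mult_def mat_def forall_4 sum_4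
    using f1(1) f2 f3(1) f4 by (simp; intro conjI; linarith)
qed
lemma GI_mult:
  assumes "0 < B y" "B y < C y" "C y < A y"
  shows "gmat A B C y ** GI A B C y = mat 1" "GI A B C y ** gmat A B C y = mat 1"
proof -
  have n: "A y + 2*B y + C y \<noteq> 0" "A y - C y \<noteq> 0" "A y - 2*B y + C y \<noteq> 0" using assms by auto
  note e = circ_ids[OF n, folded ia_def ib_def ic_def]
  show "gmat A B C y ** GI A B C y = mat 1" unfolding gmat_def GI_def by (rule circ_mult(1)[OF e])
  show "GI A B C y ** gmat A B C y = mat 1" unfolding gmat_def GI_def by (rule circ_mult(2)[OF e])
qed

lemma ginv_eq:
  assumes "0 < B y" "B y < C y" "C y < A y"
  shows "ginv A B C y = GI A B C y"
  unfolding ginv_def matrix_inv_def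
proof (rule some_equality)
  show "gmat A B C y ** GI A B C y = mat 1 \<and> GI A B C y ** gmat A B C y = mat 1" using GI_mult[where A=A and B=B and C=C and y=y, OF assms] by simp
  fix X assume X: "gmat A B C y ** X = mat 1 \<and> X ** gmat A B C y = mat 1"
  have "X = X ** (gmat A B C y ** GI A B C y)" using GI_mult(1)[where A=A and B=B and C=C and y=y, OF assms] by (simp add: matrix_mul_rid)
  also have "\<dots> = (X ** gmat A B C y) ** GI A B C y" by (simp add: matrix_mul_assoc)
  also have "\<dots> = GI A B C y" using X by (simp add: matrix_mul_lid)
  finally show "X = GI A B C y" .
qed

lemma sm0: "smooth_on U f \<Longrightarrow> y \<in> U \<Longrightarrow> f differentiable (at y)"
  unfolding smooth_on_def by (drule spec[of _ "[]"]) simp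

lemma sm1: "smooth_on U f \<Longrightarrow> y \<in> U \<Longrightarrow> pd j f differentiable (at y)"
  unfolding smooth_on_def by (drule spec[of _ "[j]"]) simp

lemma chr_sym: "christoffel A B C k i j = christoffel A B C k j i"
  by (rule ext) (simp add: christoffel_def gf_sym[of A B C j i] add.commute)

lemma curv_anti12: "curv A B C j i k l p = - curv A B C i j k l p"
  unfolding curv_def by (simp add: sum_subtractf)

lemma curv_bianchi: "curv A B C i j k l p + curv A B C j k i l p + curv A B C k i j l p = 0"
  unfolding curv_def
  apply (simp only: chr_sym[of A B C _ k i] chr_sym[of A B C _ j i] chr_sym[of A B C _ k j])
  apply (simp add: sum_subtractf)
  done

lemma GI_cases: "(\<lambda>y. GI A B C y $ m $ n) = ia A B C \<or> (\<lambda>y. GI A B C y $ m $ n) = ib A B C \<or> (\<lambda>y. GI A B C y $ m $ n) = ic A B C"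
proof -
  have "(\<lambda>y. GI A B C y $ m $ n) = (if n - m = 0 then ia A B C else if n - m = 2 then ic A B C else ib A B C)"
    by (rule ext) (simp add: GI_def)
  then show ?thesis by metis
qed

context
  fixes U :: "(real^4) set" and A B C :: "real^4 \<Rightarrow> real" and p :: "real^4"
  assumes oU: "open U" and pU: "p \<in> U" and sA: "smooth_on U A" and sB: "smooth_on U B" and sC: "smooth_on U C"
    and pos: "\<forall>y\<in>U. 0 < B y \<and> B y < C y \<and> C y < A y"
begin

lemma gf_smooth: "smooth_on U (gf A B C i j)"
  using gf_cases[of A B C i j] sA sB sC by metis

lemma d_gf: "y \<in> U \<Longrightarrow> gf A B C i j differentiable (at y)"
  using sm0[OF gf_smooth] .

lemma d_pdgf: "y \<in> U \<Longrightarrow> pd k (gf A B C i j) differentiable (at y)"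
  using sm1[OF gf_smooth] .

lemma d_Lw: "y \<in> U \<Longrightarrow> Lw A B C j k n differentiable (at y)"
  unfolding Lw_fun by (intro differentiable_divide differentiable_add differentiable_diff d_pdgf differentiable_const) simp_all

lemma d_GI: "y \<in> U \<Longrightarrow> (\<lambda>y. GI A B C y $ m $ n) differentiable (at y)"
proof -
  assume y: "y \<in> U"
  have dA: "A differentiable (at y)" "B differentiable (at y)" "C differentiable (at y)"
    using sm0[OF sA y] sm0[OF sB y] sm0[OF sC y] .
  have n: "A y + 2*B y + C y \<noteq> 0" "A y - C y \<noteq> 0" "A y - 2*B y + C y \<noteq> 0" using pos y by auto
  have "ia A B C differentiable (at y)" "ib A B C differentiable (at y)" "ic A B C differentiable (at y)"
    unfolding ia_def[abs_def] ib_def[abs_def] ic_def[abs_def]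
    using dA n by (auto intro!: derivative_intros)
  then show ?thesis using GI_cases[of A B C m n] by metis
qed

lemma ginvU: "y \<in> U \<Longrightarrow> ginv A B C y = GI A B C y"
  using pos ginv_eq by blast

lemma d_chr: "christoffel A B C m j k differentiable (at p)"
proof -
  have "(\<lambda>y. \<Sum>n\<in>UNIV. GI A B C y $ m $ n * Lw A B C j k n y) differentiable (at p)"
    by (intro differentiable_sum ballI differentiable_mult d_GI[OF pU, unfolded differentiable_def[symmetric]] d_Lw[OF pU]) simp_all
  then obtain D where "((\<lambda>y. \<Sum>n\<in>UNIV. GI A B C y $ m $ n * Lw A B C j k n y) has_derivative D) (at p)"
    unfolding differentiable_def by blast
  then have "(christoffel A B C m j k has_derivative D) (at p)"
    by (rule has_derivative_transform_within_open[OF _ oU pU]) (simp add: chr_Lw ginvU)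
  then show ?thesis unfolding differentiable_def by blast
qed


lemma F1: assumes y: "y \<in> U"
  shows "(\<Sum>m\<in>UNIV. christoffel A B C m j k y * gmat A B C y $ m $ l) = Lw A B C j k l y"
proof -
  have inv: "(\<Sum>m\<in>UNIV. gmat A B C y $ l $ m * ginv A B C y $ m $ n) = (if l = n then 1 else 0)" for n
  proof -
    have "(gmat A B C y ** ginv A B C y) $ l $ n = mat 1 $ l $ n"
      using GI_mult(1)[where A=A and B=B and C=C and y=y] pos y ginvU[OF y] by auto
    then show ?thesis unfolding matrix_matrix_mult_def mat_def by simp
  qed
  have "(\<Sum>m\<in>UNIV. christoffel A B C m j k y * gmat A B C y $ m $ l)
      = (\<Sum>m\<in>UNIV. \<Sum>n\<in>UNIV. Lw A B C j k n y * (gmat A B C y $ l $ m * ginv A B C y $ m $ n))"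
    unfolding chr_Lw by (simp add: sum_distrib_right sum_distrib_left gmat_sym[of A B C y _ l] mult_ac)
  also have "\<dots> = (\<Sum>n\<in>UNIV. \<Sum>m\<in>UNIV. Lw A B C j k n y * (gmat A B C y $ l $ m * ginv A B C y $ m $ n))"
    by (rule sum.swap)
  also have "\<dots> = (\<Sum>n\<in>UNIV. Lw A B C j k n y * (if l = n then 1 else 0))"
    by (simp add: sum_distrib_left[symmetric] inv)
  also have "\<dots> = Lw A B C j k l y" by (simp add: if_distrib cong: if_cong)
  finally show ?thesis .
qed

lemma F3: "(\<Sum>m\<in>UNIV. pd i (christoffel A B C m j k) p * gmat A B C p $ m $ l)
   = pd i (Lw A B C j k l) p - (\<Sum>m\<in>UNIV. christoffel A B C m j k p * pd i (gf A B C m l) p)"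
proof -
  have "pd i (\<lambda>y. \<Sum>m\<in>UNIV. christoffel A B C m j k y * gmat A B C y $ m $ l) p = pd i (Lw A B C j k l) p"
    by (rule pd_local[OF oU pU]) (simp add: F1)
  moreover have "pd i (\<lambda>y. \<Sum>m\<in>UNIV. christoffel A B C m j k y * gmat A B C y $ m $ l) p
     = (\<Sum>m\<in>UNIV. pd i (\<lambda>y. christoffel A B C m j k y * gmat A B C y $ m $ l) p)"
    by (rule pd_sum) (simp_all add: differentiable_mult d_chr d_gf[OF pU])
  moreover have "pd i (\<lambda>y. christoffel A B C m j k y * gmat A B C y $ m $ l) p
     = pd i (christoffel A B C m j k) p * gmat A B C p $ m $ l + christoffel A B C m j k p * pd i (gf A B C m l) p" for m
    using pd_mult[OF d_chr d_gf[OF pU], of i m j k m l] by simp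
  ultimately show ?thesis by (simp add: sum.distrib)
qed

lemma F5: "pd i (gf A B C m l) p = Lw A B C i m l p + Lw A B C i l m p"
  unfolding Lw_def by (simp add: gf_sym[of A B C l m] field_simps)

lemma pdLw: "pd i (Lw A B C j k l) p = (pd i (pd j (gf A B C k l)) p + pd i (pd k (gf A B C j l)) p - pd i (pd l (gf A B C j k)) p) / 2"
  unfolding Lw_fun
  by (simp add: pd_divc pd_add pd_diff d_pdgf[OF pU] differentiable_add differentiable_diff)

lemma F4: "pd i (Lw A B C j k l) p + pd i (Lw A B C j l k) p = pd j (Lw A B C i k l) p + pd j (Lw A B C i l k) p"
proof -
  have s: "pd i (pd j (gf A B C k l)) p = pd j (pd i (gf A B C k l)) p"
    by (rule schwarz[OF oU pU]) (simp_all add: d_gf d_pdgf[OF pU])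
  show ?thesis unfolding pdLw gf_sym[of A B C l k] using s by (simp add: field_simps)
qed

lemma anti34: "Tt A B C p i j l k = - Tt A B C p i j k l"
proof -
  have "(\<Sum>m\<in>UNIV. (pd i (christoffel A B C m j k) p - pd j (christoffel A B C m i k) p + (\<Sum>n\<in>UNIV. christoffel A B C n j k p * christoffel A B C m i n p - christoffel A B C n i k p * christoffel A B C m j n p)) * gmat A B C p $ m $ l)
       + (\<Sum>m\<in>UNIV. (pd i (christoffel A B C m j l) p - pd j (christoffel A B C m i l) p + (\<Sum>n\<in>UNIV. christoffel A B C n j l p * christoffel A B C m i n p - christoffel A B C n i l p * christoffel A B C m j n p)) * gmat A B C p $ m $ k) = 0"
    by (rule antisym_abs[where Gm = "\<lambda>m l. gmat A B C p $ m $ l" and Ga = "\<lambda>m j k. christoffel A B C m j k p"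
        and dGa = "\<lambda>i m j k. pd i (christoffel A B C m j k) p" and dG = "\<lambda>i m l. pd i (gf A B C m l) p"
        and L = "\<lambda>j k l. Lw A B C j k l p" and dL = "\<lambda>i j k l. pd i (Lw A B C j k l) p",
        OF gmat_sym F1[OF pU] F3 F5 F4])
  then show ?thesis unfolding Tt_def curv_def by linarith
qed

end

lemma ricci_chr:
  assumes nab: "nabla_q A B C k i j y = 0"
  shows "christoffel A B C (j - 1) k i y = christoffel A B C j k (i+1) y"
proof -
  have e1: "(j = m + 1) = (m = j - 1)" for m :: 4 by (metis add_diff_cancel diff_add_cancel)
  have s1: "(\<Sum>m\<in>UNIV. christoffel A B C m k i y * qcomp m j) = christoffel A B C (j - 1) k i y"
    unfolding qcomp_def e1 by (simp add: if_distrib cong: if_cong)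
  have s2: "(\<Sum>m\<in>UNIV. christoffel A B C j k m y * qcomp i m) = christoffel A B C j k (i+1) y"
    unfolding qcomp_def by (simp add: if_distrib cong: if_cong)
  show ?thesis using nab unfolding nabla_q_def s1 s2 pd_const by simp
qed

lemma Tt_anti12: "Tt A B C p j i k l = - Tt A B C p i j k l"
  unfolding Tt_def curv_anti12[of A B C j i] by (simp add: sum_negf)

lemma Tt_bianchi: "Tt A B C p i j k l + Tt A B C p j k i l + Tt A B C p k i j l = 0"
proof -
  have "Tt A B C p i j k l + Tt A B C p j k i l + Tt A B C p k i j l
     = (\<Sum>m\<in>UNIV. (curv A B C i j k m p + curv A B C j k i m p + curv A B C k i j m p) * gmat A B C p $ m $ l)"
    unfolding Tt_def by (simp add: sum.distrib distrib_right)
  also have "\<dots> = 0" by (simp add: curv_bianchi)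
  finally show ?thesis .
qed

context
  fixes U :: "(real^4) set" and A B C :: "real^4 \<Rightarrow> real" and p :: "real^4"
  assumes oU: "open U" and pU: "p \<in> U"
    and nab: "\<forall>y\<in>U. \<forall>k i j. nabla_q A B C k i j y = 0"
begin

lemma chr_shift: "y \<in> U \<Longrightarrow> christoffel A B C l k i y = christoffel A B C (l+1) k (i+1) y"
proof -
  assume y: "y \<in> U"
  have "nabla_q A B C k i (l+1) y = 0" using nab y by blast
  from ricci_chr[OF this] show ?thesis by simp
qed

lemma curv_shift: "curv A B C i j (k+1) (l+1) p = curv A B C i j k l p"
proof -
  have p1: "pd a (christoffel A B C (l+1) b (k+1)) p = pd a (christoffel A B C l b k) p" for a b
    by (rule pd_local[OF oU pU]) (rule chr_shift[symmetric])
  have "(\<Sum>m\<in>UNIV. christoffel A B C m j (k+1) p * christoffel A B C (l+1) i m p - christoffel A B C m i (k+1) p * christoffel A B C (l+1) j m p)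
      = (\<Sum>m\<in>UNIV. christoffel A B C (m+1) j (k+1) p * christoffel A B C (l+1) i (m+1) p - christoffel A B C (m+1) i (k+1) p * christoffel A B C (l+1) j (m+1) p)"
    by (rule sum_shift4)
  also have "\<dots> = (\<Sum>m\<in>UNIV. christoffel A B C m j k p * christoffel A B C l i m p - christoffel A B C m i k p * christoffel A B C l j m p)"
    by (simp only: chr_shift[OF pU, symmetric])
  finally show ?thesis unfolding curv_def p1 by simp
qed

lemma Tt_shift: "Tt A B C p i j (k+1) (m+1) = Tt A B C p i j k m"
proof -
  have "Tt A B C p i j (k+1) (m+1) = (\<Sum>l\<in>UNIV. curv A B C i j (k+1) (l+1) p * gmat A B C p $ (l+1) $ (m+1))"
    unfolding Tt_def by (rule sum_shift4)
  also have "\<dots> = Tt A B C p i j k m" unfolding Tt_def curv_shift gmat_shift ..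
  finally show ?thesis .
qed

end

lemma RT_inv:
  assumes a12: "\<And>i j k m. T j i k m = - T i j k m" and a34: "\<And>i j k m. T i j m k = - T i j k m"
    and b: "\<And>i j k l. T i j k l + T j k i l + T k i j l = 0"
    and sh: "\<And>i j k m. T i j (k+1) (m+1) = T i j k m"
  shows "RT T (qact a) (qact b) (qact c) (qact d) = RT T a b c d"
proof -
  have pr: "\<And>i j k m. T k m i j = T i j k m" by (rule pair_sym[where T=T, OF a12 a34 b])
  have "RT T (qact a) (qact b) (qact c) (qact d) = RT T (qact a) (qact b) c d" by (rule RT_shift34[where T=T, OF sh])
  also have "\<dots> = RT T c d (qact a) (qact b)" by (rule RT_pair[where T=T, OF pr, symmetric])
  also have "\<dots> = RT T c d a b" by (rule RT_shift34[where T=T, OF sh])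
  also have "\<dots> = RT T a b c d" by (rule RT_pair[where T=T, OF pr])
  finally show ?thesis .
qed

theorem theorem3p1:
  fixes U :: "(real^4) set" and A B C :: "real^4 \<Rightarrow> real" and p x :: "real^4"
  assumes "open U"
    and "smooth_on U A" and "smooth_on U B" and "smooth_on U C"
    and "\<forall>y\<in>U. 0 < B y \<and> B y < C y \<and> C y < A y"
    and "\<forall>y\<in>U. \<forall>k i j. nabla_q A B C k i j y = 0"
    and "p \<in> U"
    and "((x$1 - x$3)\<^sup>2 + (x$2 - x$4)\<^sup>2) * (x$1 - x$2 + x$3 - x$4) * (x$1 + x$2 + x$3 + x$4) \<noteq> 0"
  shows "sectional A B C p x (qact x) = sectional A B C p ((qact^^3) x) x
       \<and> sectional A B C p ((qact^^3) x) x = sectional A B C p ((qact^^2) x) (qact x)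
       \<and> sectional A B C p ((qact^^2) x) (qact x) = sectional A B C p ((qact^^2) x) ((qact^^3) x)
       \<and> sectional A B C p x ((qact^^2) x) = 0
       \<and> sectional A B C p ((qact^^3) x) (qact x) = 0"
proof -
  note oU = assms(1) and pU = assms(7)
  define T where "T = Tt A B C p"
  have a12: "\<And>i j k m. T j i k m = - T i j k m" unfolding T_def by (rule Tt_anti12)
  have a34: "\<And>i j k m. T i j m k = - T i j k m"
    unfolding T_def by (rule anti34[OF oU pU assms(2,3,4,5)])
  have b: "\<And>i j k l. T i j k l + T j k i l + T k i j l = 0" unfolding T_def by (rule Tt_bianchi)
  have sh: "\<And>i j k m. T i j (k+1) (m+1) = T i j k m" unfolding T_def by (rule Tt_shift[OF oU pU assms(6)])
  have R: "R4 A B C p a b c d = RT T a b c d" for a b c d unfolding T_def by (rule R4_RT)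
  have secq: "sectional A B C p (qact a) (qact b) = sectional A B C p a b" for a b
    unfolding sectional_def R gform_q RT_inv[where T=T, OF a12 a34 b sh] ..
  have secsw: "sectional A B C p b a = sectional A B C p a b" for a b
  proof -
    have "RT T b a b a = RT T a b a b" using RT_swap12[where T=T, OF a12, of b a b a] RT_swap34[where T=T, OF a34, of a b b a] by simp
    then show ?thesis unfolding sectional_def R using gform_sym[of A B C p a b] by (simp add: mult.commute)
  qed
  have zero: "sectional A B C p a (qact (qact a)) = 0" if q4a: "qact (qact (qact (qact a))) = a" for a
  proof -
    let ?b = "qact (qact a)"
    have "RT T a ?b a ?b = RT T a ?b (qact a) (qact ?b)" by (rule RT_shift34[where T=T, OF sh, symmetric])
    also have "\<dots> = RT T a ?b (qact (qact a)) (qact (qact ?b))" by (rule RT_shift34[where T=T, OF sh, symmetric])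
    also have "\<dots> = RT T a ?b ?b a" using q4a by simp
    also have "\<dots> = - RT T a ?b a ?b" by (rule RT_swap34[where T=T, OF a34])
    finally have "RT T a ?b a ?b = 0" by simp
    then show ?thesis unfolding sectional_def R by simp
  qed
  define x1 where "x1 = qact x"
  define x2 where "x2 = qact x1"
  define x3 where "x3 = qact x2"
  have p2: "(qact^^2) x = x2" and p3: "(qact^^3) x = x3" unfolding x1_def x2_def x3_def by (simp_all add: numeral_eq_Suc)
  have q4x: "qact x3 = x" using q4[of x] unfolding x1_def x2_def x3_def by (simp add: numeral_eq_Suc)
  have qs: "qact x = x1" "qact x1 = x2" "qact x2 = x3" "qact x3 = x"
    using q4x unfolding x1_def x2_def x3_def by simp_all
  have E1: "sectional A B C p x x1 = sectional A B C p x2 x3"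
    using secq[of x x1] secq[of x1 x2] qs by simp
  have E3: "sectional A B C p x3 x = sectional A B C p x2 x3"
    using secq[of x2 x3] qs by simp
  have E4: "sectional A B C p x2 x1 = sectional A B C p x x1"
    using secsw[of x1 x2] secq[of x x1] qs by simp
  have E2: "sectional A B C p x x2 = 0"
    using zero[of x] qs by simp
  have E5: "sectional A B C p x3 x1 = 0"
    using zero[of x3] qs by simp
  show ?thesis unfolding p2 p3 x1_def[symmetric] using E1 E2 E3 E4 E5 by simp
qed

end
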